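(* Let $\widetilde\nabla$ be the canonical snm-connection on $\mathbb R^3$ determined by $\mathsf C=\partial_z$. Let $c\in\mathbb R\setminus\{0,\tfrac12\}$ and let $$u(x,y)=-\frac1c\log\cos(cx)-\frac{2c-1}{c}\log\cos\Big(\frac{cy}{2c-1}\Big)$$ on a connected open set $\Omega\subset\mathbb R^2$ on which $\cos(cx)>0$ and $\cos\big(cy/(2c-1)\big)>0$. Then the graph $M=\{(x,y,u(x,y)):(x,y)\in\Omega\}$ satisfies $K(p)=\widetilde K(T_pM)$ at every point $p\in M$ (equivalently, $G=\langle \partial_z,N\rangle H$ on $M$, where $N$ is the upward unit normal).
   Context: Let $\langle\cdot,\cdot\rangle$ be the Euclidean metric on $\mathbb R^3$ and $\widetilde\nabla^0$ its Levi-Civita connection (the ordinary directional derivative). Given a smooth vector field $\mathsf C$ on $\mathbb R^3$, the semi-symmetric non-metric connection (snm-connection) determined by $\mathsf C$ is $\widetilde\nabla_XY=\widetilde\nabla^0_XY+\langle \mathsf C,Y\rangle X$. Its curvature tensor is $\widetilde R(X,Y)Z=\widetilde\nabla_X\widetilde\nabla_YZ-\widetilde\nabla_Y\widetilde\nabla_XZ-\widetilde\nabla_{[X,Y]}Z$. For a $2$-dimensional subspace $\pi\subset T_p\mathbb R^3$ with orthonormal basis $\{e_1,e_2\}$, its sectional curvature with respect to $\widetilde\nabla$ is $\widetilde K(\pi)=\frac12\big(\langle\widetilde R(e_1,e_2)e_2,e_1\rangle+\langle\widetilde R(e_2,e_1)e_1,e_2\rangle\big)$. For a surface $M$ immersed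 in $\mathbb R^3$, the induced connection is $\nabla_XY=(\widetilde\nabla_XY)^{\top}$ for tangent vector fields $X,Y$, with curvature tensor $R$ defined by the same formula as $\widetilde R$, and the sectional curvature of $M$ with respect to $\widetilde\nabla$ at $p$ is $K(p)=\frac12\big(\langle R(e_1,e_2)e_2,e_1\rangle+\langle R(e_2,e_1)e_1,e_2\rangle\big)$ for an orthonormal basis $\{e_1,e_2\}$ of $T_pM$. $G$ and $H$ denote the Gaussian and mean curvature (one half the trace of the shape operator for the second fundamental form $h(X,Y)=\langle\widetilde\nabla^0_XY,N\rangle$). *)

theory Defs
  imports "HOL-Analysis.Analysis" "HOL-Analysis.Cross3"
begin

definition partial_dir :: "(real^2 \<Rightarrow> real^3) \<Rightarrow> real^2 \<Rightarrow> (real^2 \<Rightarrow> real^3)" where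
  "partial_dir V w = (\<lambda>q. frechet_derivative V (at q) w)"

fun iter_partial :: "(real^2 \<Rightarrow> real^3) \<Rightarrow> (real^2) list \<Rightarrow> (real^2 \<Rightarrow> real^3)" where
  "iter_partial V [] = V"
| "iter_partial V (w # ws) = partial_dir (iter_partial V ws) w"

definition smooth_field_on :: "(real^2) set \<Rightarrow> (real^2 \<Rightarrow> real^3) \<Rightarrow> bool" where
  "smooth_field_on S V \<longleftrightarrow> (\<forall>ws. iter_partial V ws differentiable_on S)"

(* Vector fields along M are represented as functions V : real^2 \<Rightarrow> real^3,
   V q being the vector at the point graph_map u q. *)
definition graph_map :: "(real^2 \<Rightarrow> real) \<Rightarrow> real^2 \<Rightarrow> real^3" where
  "graph_map u q = vector [q$1, q$2, u q]"

(* projection R^3 \<rightarrow> R^2 onto the (x,y) coordinates: the inverse of graph_map on M *)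
definition proj12 :: "real^3 \<Rightarrow> real^2" where
  "proj12 v = vector [v$1, v$2]"

definition unit_normal :: "(real^2 \<Rightarrow> real) \<Rightarrow> real^2 \<Rightarrow> real^3" where
  "unit_normal u q =
     (let n = cross3 (frechet_derivative (graph_map u) (at q) (axis 1 1))
                     (frechet_derivative (graph_map u) (at q) (axis 2 1))
      in (1 / norm n) *\<^sub>R n)"

definition tangent_proj :: "(real^2 \<Rightarrow> real) \<Rightarrow> real^2 \<Rightarrow> real^3 \<Rightarrow> real^3" where
  "tangent_proj u q v = v - (v \<bullet> unit_normal u q) *\<^sub>R unit_normal u q"

definition tangent_field_on :: "(real^2 \<Rightarrow> real) \<Rightarrow> (real^2) set \<Rightarrow> (real^2 \<Rightarrow> real^3) \<Rightarrow> bool" where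
  "tangent_field_on u S X \<longleftrightarrow> (\<forall>q\<in>S. X q \<bullet> unit_normal u q = 0)"

(* Levi-Civita (flat) derivative \<nabla>^0_X V along M, for X tangent to M:
   derivative of V \<circ> proj12 in direction X *)
definition flatD :: "(real^2 \<Rightarrow> real^3) \<Rightarrow> (real^2 \<Rightarrow> real^3) \<Rightarrow> real^2 \<Rightarrow> real^3" where
  "flatD X V q = frechet_derivative V (at q) (proj12 (X q))"

definition Cz :: "real^3" where
  "Cz = axis 3 1"

definition snm_nabla :: "(real^2 \<Rightarrow> real^3) \<Rightarrow> (real^2 \<Rightarrow> real^3) \<Rightarrow> real^2 \<Rightarrow> real^3" where
  "snm_nabla X Y q = flatD X Y q + (Cz \<bullet> Y q) *\<^sub>R X q"

definition ind_nabla :: "(real^2 \<Rightarrow> real) \<Rightarrow> (real^2 \<Rightarrow> real^3) \<Rightarrow> (real^2 \<Rightarrow> real^3) \<Rightarrow> real^2 \<Rightarrow> real^3" where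
  "ind_nabla u X Y q = tangent_proj u q (snm_nabla X Y q)"

definition lie_bracket :: "(real^2 \<Rightarrow> real^3) \<Rightarrow> (real^2 \<Rightarrow> real^3) \<Rightarrow> real^2 \<Rightarrow> real^3" where
  "lie_bracket X Y q = flatD X Y q - flatD Y X q"

definition snm_curv :: "(real^2 \<Rightarrow> real^3) \<Rightarrow> (real^2 \<Rightarrow> real^3) \<Rightarrow> (real^2 \<Rightarrow> real^3) \<Rightarrow> real^2 \<Rightarrow> real^3" where
  "snm_curv X Y Z q = snm_nabla X (snm_nabla Y Z) q - snm_nabla Y (snm_nabla X Z) q
                      - snm_nabla (lie_bracket X Y) Z q"

definition ind_curv :: "(real^2 \<Rightarrow> real) \<Rightarrow> (real^2 \<Rightarrow> real^3) \<Rightarrow> (real^2 \<Rightarrow> real^3) \<Rightarrow> (real^2 \<Rightarrow> real^3) \<Rightarrow> real^2 \<Rightarrow> real^3" where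
  "ind_curv u X Y Z q = ind_nabla u X (ind_nabla u Y Z) q - ind_nabla u Y (ind_nabla u X Z) q
                        - ind_nabla u (lie_bracket X Y) Z q"

(* sectional curvature of T_pM w.r.t. \<nabla>~ (computed with fields E1,E2 orthonormal at q) *)
definition snm_sec :: "(real^2 \<Rightarrow> real^3) \<Rightarrow> (real^2 \<Rightarrow> real^3) \<Rightarrow> real^2 \<Rightarrow> real" where
  "snm_sec E1 E2 q = (snm_curv E1 E2 E2 q \<bullet> E1 q + snm_curv E2 E1 E1 q \<bullet> E2 q) / 2"

definition ind_sec :: "(real^2 \<Rightarrow> real) \<Rightarrow> (real^2 \<Rightarrow> real^3) \<Rightarrow> (real^2 \<Rightarrow> real^3) \<Rightarrow> real^2 \<Rightarrow> real" where
  "ind_sec u E1 E2 q = (ind_curv u E1 E2 E2 q \<bullet> E1 q + ind_curv u E2 E1 E1 q \<bullet> E2 q) / 2"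

end

theory Submission
  imports Defs
begin

lemma nth_hd: "((\<lambda>x::real^'n. x$i) has_derivative (\<lambda>v. v$i)) F"
  by (rule bounded_linear_imp_has_derivative[OF bounded_linear_vec_nth])

lemma vec3_eq: "(vector [a,b,c] :: real^3) = a *\<^sub>R axis 1 1 + b *\<^sub>R axis 2 1 + c *\<^sub>R axis 3 1"
  by (simp add: vec_eq_iff forall_3 axis_def)

definition gx :: "real \<Rightarrow> real^2 \<Rightarrow> real" where "gx c q = tan (c*q$1)"
definition gy :: "real \<Rightarrow> real^2 \<Rightarrow> real" where "gy c q = tan (c*q$2/(2*c-1))"

lemma u_deriv:
  fixes c :: real and q :: "real^2"
  assumes c0: "c \<noteq> 0" and c1: "2*c - 1 \<noteq> 0"
    and cp: "cos (c * q$1) > 0" "cos (c * q$2 / (2*c - 1)) > 0"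
    and ud: "\<forall>q. u q = - (1/c) * ln (cos (c * q$1)) - ((2*c - 1)/c) * ln (cos (c * q$2 / (2*c - 1)))"
  shows "(u has_derivative (\<lambda>v. gx c q * v$1 + gy c q * v$2)) (at q)"
proof -
  have e: "u = (\<lambda>q. - (1/c) * ln (cos (c * q$1)) - ((2*c - 1)/c) * ln (cos (c * q$2 / (2*c - 1))))"
    using ud by auto
  show ?thesis unfolding e gx_def gy_def tan_def
    using c0 c1 cp apply (auto intro!: derivative_eq_intros nth_hd)
    by (simp add: fun_eq_iff divide_inverse algebra_simps)
qed

lemma graph_deriv:
  assumes "(u has_derivative (\<lambda>v. a * v$1 + b * v$2)) (at q)"
  shows "(graph_map u has_derivative (\<lambda>v. v$1 *\<^sub>R axis 1 1 + v$2 *\<^sub>R axis 2 1 + (a * v$1 + b * v$2) *\<^sub>R axis 3 1)) (at q)"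
proof -
  have e: "graph_map u = (\<lambda>q. q$1 *\<^sub>R axis 1 1 + q$2 *\<^sub>R axis 2 1 + u q *\<^sub>R axis 3 1)"
    by (simp add: fun_eq_iff graph_map_def vec3_eq)
  show ?thesis unfolding e
    using assms by (auto intro!: derivative_eq_intros nth_hd)
qed

lemma c3: "cross3 (vector [1,0,a]) (vector [0,1,b]) = (vector [-a, -b, 1] :: real^3)"
  by (simp add: cross3_def)
lemma n3: "norm (vector [-a, -b, 1] :: real^3) = sqrt (1 + a^2 + b^2)"
  by (simp add: norm_eq_sqrt_inner inner_vec_def sum_3 power2_eq_square algebra_simps)
lemma un_eq:
  assumes "(u has_derivative (\<lambda>v. a * v$1 + b * v$2)) (at q)"
  shows "unit_normal u q = (1 / sqrt (1 + a^2 + b^2)) *\<^sub>R vector [-a, -b, 1]"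
proof -
  have f: "frechet_derivative (graph_map u) (at q) = (\<lambda>v. v$1 *\<^sub>R axis 1 1 + v$2 *\<^sub>R axis 2 1 + (a * v$1 + b * v$2) *\<^sub>R axis 3 1)"
    using frechet_derivative_at[OF graph_deriv[OF assms], symmetric] .
  have a1: "frechet_derivative (graph_map u) (at q) (axis 1 1) = vector [1,0,a]"
    unfolding f by (simp add: vec_eq_iff forall_3 axis_def)
  have a2: "frechet_derivative (graph_map u) (at q) (axis 2 1) = vector [0,1,b]"
    unfolding f by (simp add: vec_eq_iff forall_3 axis_def)
  show ?thesis unfolding unit_normal_def a1 a2 c3 Let_def n3 ..
qed
lemma gx_deriv: assumes "cos (c*q$1) \<noteq> 0"
  shows "(gx c has_derivative (\<lambda>v. c / (cos (c*q$1))^2 * v$1)) (at q)"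
  unfolding gx_def using assms apply (auto intro!: derivative_eq_intros nth_hd)
  by (simp add: fun_eq_iff divide_inverse algebra_simps)
lemma gy_deriv: assumes "cos (c*q$2/(2*c-1)) \<noteq> 0" "2*c-1 \<noteq> 0"
  shows "(gy c has_derivative (\<lambda>v. (c/(2*c-1)) / (cos (c*q$2/(2*c-1)))^2 * v$2)) (at q)"
  unfolding gy_def using assms apply (auto intro!: derivative_eq_intros nth_hd)
  by (simp add: fun_eq_iff field_simps)
lemma f_diff: assumes "cos (c*q$1) \<noteq> 0" "cos (c*q$2/(2*c-1)) \<noteq> 0" "2*c-1 \<noteq> 0"
  shows "(\<lambda>q. 1 / sqrt (1 + gx c q^2 + gy c q^2)) differentiable at q"
proof -
  have W: "(\<lambda>q. 1 + gx c q^2 + gy c q^2) differentiable at q"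
    using gx_deriv[OF assms(1)] gy_deriv[OF assms(2,3)]
    by (intro differentiable_add differentiable_power differentiable_const) (auto simp: differentiable_def)
  have p: "1 + gx c q^2 + gy c q^2 > 0" by (simp add: add_pos_nonneg)
  have "sqrt differentiable at (1 + gx c q^2 + gy c q^2)"
    using DERIV_real_sqrt[OF p] unfolding has_field_derivative_def differentiable_def by blast
  then have "(\<lambda>q. sqrt (1 + gx c q^2 + gy c q^2)) differentiable at q"
    using differentiable_compose[OF _ W] by blast
  then show ?thesis using p by (intro differentiable_divide differentiable_const) auto
qed
lemma N_props:
  fixes c :: real and \<Omega> :: "(real^2) set" and u :: "real^2 \<Rightarrow> real"
  assumes c0: "c \<noteq> 0" and c1: "2*c - 1 \<noteq> 0" and op: "open \<Omega>" and q0: "q0 \<in> \<Omega>"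
    and good: "\<forall>q\<in>\<Omega>. cos (c * q$1) > 0 \<and> cos (c * q$2 / (2*c - 1)) > 0"
    and ud: "\<forall>q. u q = - (1/c) * ln (cos (c * q$1)) - ((2*c - 1)/c) * ln (cos (c * q$2 / (2*c - 1)))"
  shows "\<exists>DN. (unit_normal u has_derivative DN) (at q0) \<and>
     (\<forall>v e. e \<bullet> vector [-gx c q0, -gy c q0, 1] = 0 \<longrightarrow>
        DN v \<bullet> e = - (1 / sqrt (1 + gx c q0^2 + gy c q0^2)) *
          (c / (cos (c*q0$1))^2 * v$1 * e$1 + (c/(2*c-1)) / (cos (c * q0$2 / (2*c - 1)))^2 * v$2 * e$2))"
proof -
  define m where "m = (\<lambda>q. (-gx c q) *\<^sub>R axis 1 1 + (-gy c q) *\<^sub>R axis 2 1 + (axis 3 1 :: real^3))"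
  define f where "f = (\<lambda>q. 1 / sqrt (1 + gx c q^2 + gy c q^2))"
  define Ax where "Ax = c / (cos (c*q0$1))^2"
  define Ay where "Ay = (c/(2*c-1)) / (cos (c * q0$2 / (2*c - 1)))^2"
  have eqO: "f q *\<^sub>R m q = unit_normal u q" if "q \<in> \<Omega>" for q
    using un_eq[OF u_deriv[OF c0 c1 _ _ ud]] good that by (simp add: f_def m_def vec3_eq)
  have cq: "cos (c*q0$1) \<noteq> 0" "cos (c * q0$2 / (2*c - 1)) \<noteq> 0" using good q0 by auto
  have mder: "(m has_derivative (\<lambda>v. (- (Ax * v$1)) *\<^sub>R axis 1 1 + (- (Ay * v$2)) *\<^sub>R axis 2 1)) (at q0)"
    unfolding m_def Ax_def Ay_def
    using gx_deriv[OF cq(1)] gy_deriv[OF cq(2) c1] by (auto intro!: derivative_eq_intros)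
  have "f differentiable at q0" unfolding f_def using f_diff[OF cq c1] .
  then obtain Df where Df: "(f has_derivative Df) (at q0)" by (auto simp: differentiable_def)
  have "((\<lambda>q. f q *\<^sub>R m q) has_derivative (\<lambda>v. f q0 *\<^sub>R ((- (Ax * v$1)) *\<^sub>R axis 1 1 + (- (Ay * v$2)) *\<^sub>R axis 2 1) + Df v *\<^sub>R m q0)) (at q0)"
    by (rule has_derivative_scaleR[OF Df mder])
  then have ND: "(unit_normal u has_derivative (\<lambda>v. f q0 *\<^sub>R ((- (Ax * v$1)) *\<^sub>R axis 1 1 + (- (Ay * v$2)) *\<^sub>R axis 2 1) + Df v *\<^sub>R m q0)) (at q0)"
    by (rule has_derivative_transform_within_open[OF _ op q0]) (simp add: eqO)
  show ?thesis
  proof (intro exI conjI allI impI, rule ND)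
    fix v :: "real^2" and e :: "real^3" assume "e \<bullet> vector [-gx c q0, -gy c q0, 1] = 0"
    then have "e \<bullet> m q0 = 0" by (simp add: m_def vec3_eq)
    then show "(f q0 *\<^sub>R ((- (Ax * v$1)) *\<^sub>R axis 1 1 + (- (Ay * v$2)) *\<^sub>R axis 2 1) + Df v *\<^sub>R m q0) \<bullet> e = - (1 / sqrt (1 + gx c q0^2 + gy c q0^2)) *
          (c / (cos (c*q0$1))^2 * v$1 * e$1 + (c/(2*c-1)) / (cos (c * q0$2 / (2*c - 1)))^2 * v$2 * e$2)"
      by (simp add: inner_add_left inner_scaleR_left inner_commute f_def Ax_def Ay_def inner_axis algebra_simps)
  qed
qed

lemma vec2_eq: "(v::real^2) = v$1 *\<^sub>R axis 1 1 + v$2 *\<^sub>R axis 2 1"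
  by (simp add: vec_eq_iff forall_2 axis_def)

lemma diff_scaleR: "f differentiable at x \<Longrightarrow> g differentiable at x \<Longrightarrow> (\<lambda>x. f x *\<^sub>R g x) differentiable at x"
  unfolding differentiable_def by (blast intro: has_derivative_scaleR)

lemma diff_inner: "f differentiable at x \<Longrightarrow> g differentiable at x \<Longrightarrow> (\<lambda>x. f x \<bullet> g x) differentiable at x"
  unfolding differentiable_def by (blast intro: has_derivative_inner)

lemma smooth_diff:
  assumes "smooth_field_on \<Omega> Y" "open \<Omega>" "q \<in> \<Omega>"
  shows "Y differentiable at q" "partial_dir Y w differentiable at q"
proof -
  have "iter_partial Y [] differentiable_on \<Omega>" "iter_partial Y [w] differentiable_on \<Omega>"
    using assms(1) unfolding smooth_field_on_def by blast+
  then show "Y differentiable at q" "partial_dir Y w differentiable at q"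
    using assms(2,3) by (auto simp: differentiable_on_eq_differentiable_at)
qed

lemma snm_diff:
  assumes X: "smooth_field_on \<Omega> X" and Y: "smooth_field_on \<Omega> Y" and op: "open \<Omega>" and q0: "q0 \<in> \<Omega>"
  shows "snm_nabla X Y differentiable at q0"
proof -
  define G where "G = (\<lambda>q. (X q$1) *\<^sub>R partial_dir Y (axis 1 1) q + (X q$2) *\<^sub>R partial_dir Y (axis 2 1) q + (Cz \<bullet> Y q) *\<^sub>R X q)"
  have eq: "G q = snm_nabla X Y q" if "q \<in> \<Omega>" for q
  proof -
    have l: "linear (frechet_derivative Y (at q))"
      by (rule linear_frechet_derivative, rule smooth_diff(1)[OF Y op that])
    have p: "proj12 (X q) = (X q$1) *\<^sub>R axis 1 1 + (X q$2) *\<^sub>R axis 2 1"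
      by (simp add: proj12_def vec_eq_iff forall_2 axis_def)
    have "frechet_derivative Y (at q) (proj12 (X q)) = frechet_derivative Y (at q) ((X q$1) *\<^sub>R axis 1 1 + (X q$2) *\<^sub>R axis 2 1)"
      by (simp only: p)
    also have "\<dots> = (X q$1) *\<^sub>R frechet_derivative Y (at q) (axis 1 1) + (X q$2) *\<^sub>R frechet_derivative Y (at q) (axis 2 1)"
      using l by (simp add: linear_add linear_scale)
    finally show ?thesis by (simp add: G_def snm_nabla_def flatD_def partial_dir_def)
  qed
  have Xd: "X differentiable at q0" using smooth_diff(1)[OF X op q0] .
  have Xi: "(\<lambda>q. X q $ i) differentiable at q0" for i
    using Xd unfolding differentiable_def by (blast intro: has_derivative_compose[OF _ nth_hd])
  have "G differentiable at q0" unfolding G_def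
    by (intro differentiable_add diff_scaleR diff_inner Xi smooth_diff[OF Y op q0] Xd differentiable_const)
  then obtain D where "(G has_derivative D) (at q0)" by (auto simp: differentiable_def)
  then have "(snm_nabla X Y has_derivative D) (at q0)"
    by (rule has_derivative_transform_within_open[OF _ op q0]) (simp add: eq)
  then show ?thesis by (auto simp: differentiable_def)
qed

lemma tp_deriv:
  assumes N: "(unit_normal u has_derivative DN) (at q0)" and F: "F differentiable at q0"
    and e: "e \<bullet> unit_normal u q0 = 0"
  shows "frechet_derivative (\<lambda>q. tangent_proj u q (F q)) (at q0) v \<bullet> e
         = frechet_derivative F (at q0) v \<bullet> e - (F q0 \<bullet> unit_normal u q0) * (DN v \<bullet> e)"
proof -
  obtain DF where DF: "(F has_derivative DF) (at q0)" using F by (auto simp: differentiable_def)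
  have "((\<lambda>q. tangent_proj u q (F q)) has_derivative
     (\<lambda>v. DF v - ((F q0 \<bullet> unit_normal u q0) *\<^sub>R DN v + (F q0 \<bullet> DN v + DF v \<bullet> unit_normal u q0) *\<^sub>R unit_normal u q0))) (at q0)"
    unfolding tangent_proj_def
    by (intro has_derivative_diff DF has_derivative_scaleR has_derivative_inner N)
  note eq = frechet_derivative_at[OF this, symmetric]
  show ?thesis
    by (simp add: eq frechet_derivative_at[OF DF, symmetric] inner_diff_left inner_add_left e inner_commute[of "unit_normal u q0" e])
qed

lemma curv_diff:
  assumes N: "(unit_normal u has_derivative DN) (at q0)"
    and W1: "snm_nabla Y Y differentiable at q0" and W2: "snm_nabla X Y differentiable at q0"
    and x: "X q0 \<bullet> unit_normal u q0 = 0"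
  shows "ind_curv u X Y Y q0 \<bullet> X q0 = snm_curv X Y Y q0 \<bullet> X q0
     - (snm_nabla Y Y q0 \<bullet> unit_normal u q0) * (DN (proj12 (X q0)) \<bullet> X q0 + (Cz \<bullet> unit_normal u q0) * (X q0 \<bullet> X q0))
     + (snm_nabla X Y q0 \<bullet> unit_normal u q0) * (DN (proj12 (Y q0)) \<bullet> X q0 + (Cz \<bullet> unit_normal u q0) * (Y q0 \<bullet> X q0))"
proof -
  have ind: "ind_nabla u Z V = (\<lambda>q. tangent_proj u q (snm_nabla Z V q))" for Z V by (simp add: fun_eq_iff ind_nabla_def)
  have tpi: "tangent_proj u q0 w \<bullet> X q0 = w \<bullet> X q0" for w
    using x by (simp add: tangent_proj_def inner_diff_left inner_commute[of "unit_normal u q0"])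
  have d1: "frechet_derivative (ind_nabla u Y Y) (at q0) (proj12 (X q0)) \<bullet> X q0 = frechet_derivative (snm_nabla Y Y) (at q0) (proj12 (X q0)) \<bullet> X q0 - (snm_nabla Y Y q0 \<bullet> unit_normal u q0) * (DN (proj12 (X q0)) \<bullet> X q0)"
    using tp_deriv[OF N W1 x] by (simp add: ind)
  have d2: "frechet_derivative (ind_nabla u X Y) (at q0) (proj12 (Y q0)) \<bullet> X q0 = frechet_derivative (snm_nabla X Y) (at q0) (proj12 (Y q0)) \<bullet> X q0 - (snm_nabla X Y q0 \<bullet> unit_normal u q0) * (DN (proj12 (Y q0)) \<bullet> X q0)"
    using tp_deriv[OF N W2 x] by (simp add: ind)
  have tv: "Cz \<bullet> ind_nabla u Z V q0 = Cz \<bullet> snm_nabla Z V q0 - (snm_nabla Z V q0 \<bullet> unit_normal u q0) * (Cz \<bullet> unit_normal u q0)" for Z V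
    by (simp add: ind_nabla_def tangent_proj_def inner_diff_right)
  have o1: "ind_nabla u X (ind_nabla u Y Y) q0 \<bullet> X q0 = frechet_derivative (ind_nabla u Y Y) (at q0) (proj12 (X q0)) \<bullet> X q0 + (Cz \<bullet> ind_nabla u Y Y q0) * (X q0 \<bullet> X q0)"
    by (simp add: ind_nabla_def[of u X "ind_nabla u Y Y"] tpi snm_nabla_def[of X "ind_nabla u Y Y"] flatD_def inner_add_left)
  have s1: "snm_nabla X (snm_nabla Y Y) q0 \<bullet> X q0 = frechet_derivative (snm_nabla Y Y) (at q0) (proj12 (X q0)) \<bullet> X q0 + (Cz \<bullet> snm_nabla Y Y q0) * (X q0 \<bullet> X q0)"
    by (simp add: snm_nabla_def[of X "snm_nabla Y Y"] flatD_def inner_add_left)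
  have o2: "ind_nabla u Y (ind_nabla u X Y) q0 \<bullet> X q0 = frechet_derivative (ind_nabla u X Y) (at q0) (proj12 (Y q0)) \<bullet> X q0 + (Cz \<bullet> ind_nabla u X Y q0) * (Y q0 \<bullet> X q0)"
    by (simp add: ind_nabla_def[of u Y "ind_nabla u X Y"] tpi snm_nabla_def[of Y "ind_nabla u X Y"] flatD_def inner_add_left)
  have s2: "snm_nabla Y (snm_nabla X Y) q0 \<bullet> X q0 = frechet_derivative (snm_nabla X Y) (at q0) (proj12 (Y q0)) \<bullet> X q0 + (Cz \<bullet> snm_nabla X Y q0) * (Y q0 \<bullet> X q0)"
    by (simp add: snm_nabla_def[of Y "snm_nabla X Y"] flatD_def inner_add_left)
  have o3: "ind_nabla u (lie_bracket X Y) Y q0 \<bullet> X q0 = snm_nabla (lie_bracket X Y) Y q0 \<bullet> X q0"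
    by (simp add: ind_nabla_def tpi)
  show ?thesis
    unfolding ind_curv_def snm_curv_def inner_diff_left o1 o2 o3 s1 s2 d1 d2 tv
    by (simp add: algebra_simps)
qed

lemma tang_deriv:
  assumes N: "(unit_normal u has_derivative DN) (at q0)" and E: "E differentiable at q0"
    and op: "open \<Omega>" and q0: "q0 \<in> \<Omega>" and t: "tangent_field_on u \<Omega> E"
  shows "frechet_derivative E (at q0) v \<bullet> unit_normal u q0 + E q0 \<bullet> DN v = 0"
proof -
  obtain DE where DE: "(E has_derivative DE) (at q0)" using E by (auto simp: differentiable_def)
  have h1: "((\<lambda>q. E q \<bullet> unit_normal u q) has_derivative (\<lambda>v. E q0 \<bullet> DN v + DE v \<bullet> unit_normal u q0)) (at q0)"
    by (rule has_derivative_inner[OF DE N])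
  have h2: "((\<lambda>q. E q \<bullet> unit_normal u q) has_derivative (\<lambda>v. 0)) (at q0)"
    by (rule has_derivative_transform_within_open[OF has_derivative_const op q0])
       (use t in \<open>simp add: tangent_field_on_def\<close>)
  have "(\<lambda>v. E q0 \<bullet> DN v + DE v \<bullet> unit_normal u q0) = (\<lambda>v. 0)"
    using has_derivative_unique[OF h1 h2] .
  then have "E q0 \<bullet> DN v + DE v \<bullet> unit_normal u q0 = 0" by meson
  then show ?thesis using frechet_derivative_at[OF DE] by simp
qed

lemma alg1:
  fixes a1 a2 b1 b2 g1 g2 :: real
  assumes "a1^2+a2^2+(g1*a1+g2*a2)^2 = 1" "b1^2+b2^2+(g1*b1+g2*b2)^2 = 1"
    "a1*b1+a2*b2+(g1*a1+g2*a2)*(g1*b1+g2*b2) = 0"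
  shows "(a1*b2-a2*b1)^2 * (1+g1^2+g2^2) = 1"
  using assms by algebra
lemma alg2:
  fixes a1 a2 b1 b2 g1 g2 :: real
  assumes "a1^2+a2^2+(g1*a1+g2*a2)^2 = 1" "b1^2+b2^2+(g1*b1+g2*b2)^2 = 1"
    "a1*b1+a2*b2+(g1*a1+g2*a2)*(g1*b1+g2*b2) = 0"
  shows "(a1^2+b1^2) * (1+g1^2+g2^2) = 1 + g2^2"
  using assms by algebra
lemma alg3:
  fixes a1 a2 b1 b2 g1 g2 :: real
  assumes "a1^2+a2^2+(g1*a1+g2*a2)^2 = 1" "b1^2+b2^2+(g1*b1+g2*b2)^2 = 1"
    "a1*b1+a2*b2+(g1*a1+g2*a2)*(g1*b1+g2*b2) = 0"
  shows "(a2^2+b2^2) * (1+g1^2+g2^2) = 1 + g1^2"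
  using assms by algebra

lemma final_alg:
  fixes a1 a2 b1 b2 g1 g2 A B c k :: real
  assumes o: "a1^2+a2^2+(g1*a1+g2*a2)^2 = 1" "b1^2+b2^2+(g1*b1+g2*b2)^2 = 1"
    "a1*b1+a2*b2+(g1*a1+g2*a2)*(g1*b1+g2*b2) = 0"
    and A: "A = c*(1+g1^2)" and B: "B = k*(1+g2^2)" and k: "k*(2*c-1) = c"
  shows "2*((A*a1*a1+B*a2*a2)*(A*b1*b1+B*b2*b2)) - 2*(A*a1*b1+B*a2*b2)^2 = A*(a1^2+b1^2)+B*(a2^2+b2^2)"
proof -
  define W where "W = 1+g1^2+g2^2"
  have Wp: "W > 0" unfolding W_def by (simp add: add_pos_nonneg)
  have e1: "(a1*b2-a2*b1)^2 * W = 1" using alg1[OF o] by (simp add: W_def)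
  have e2: "(a1^2+b1^2) * W = 1 + g2^2" using alg2[OF o] by (simp add: W_def)
  have e3: "(a2^2+b2^2) * W = 1 + g1^2" using alg3[OF o] by (simp add: W_def)
  have l: "2*((A*a1*a1+B*a2*a2)*(A*b1*b1+B*b2*b2)) - 2*(A*a1*b1+B*a2*b2)^2 = 2*A*B*(a1*b2-a2*b1)^2"
    by (simp add: power2_eq_square algebra_simps)
  have "(2*A*B*(a1*b2-a2*b1)^2) * W = (A*(a1^2+b1^2)+B*(a2^2+b2^2)) * W"
  proof -
    have "k*(2*c-1) = 2*c*k - k" by (simp add: algebra_simps)
    then have kk: "2*c*k = c+k" using k by linarith
    have "(2*A*B*(a1*b2-a2*b1)^2) * W = 2*A*B" using e1 by algebra
    also have "\<dots> = A*(1+g2^2) + B*(1+g1^2)" unfolding A B using kk by algebra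
    also have "\<dots> = (A*(a1^2+b1^2)+B*(a2^2+b2^2)) * W" using e2 e3 by algebra
    finally show ?thesis .
  qed
  then show ?thesis using Wp l by simp
qed

theorem mainTheorem4:
  fixes c :: real and \<Omega> :: "(real^2) set" and u :: "real^2 \<Rightarrow> real"
  assumes "c \<noteq> 0" and "c \<noteq> 1/2"
    and "open \<Omega>" and "connected \<Omega>"
    and "\<forall>q\<in>\<Omega>. cos (c * q$1) > 0 \<and> cos (c * q$2 / (2*c - 1)) > 0"
    and "\<forall>q. u q = - (1/c) * ln (cos (c * q$1)) - ((2*c - 1)/c) * ln (cos (c * q$2 / (2*c - 1)))"
  shows "\<forall>q\<in>\<Omega>. \<forall>E1 E2.
           smooth_field_on \<Omega> E1 \<and> smooth_field_on \<Omega> E2 \<and>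
           tangent_field_on u \<Omega> E1 \<and> tangent_field_on u \<Omega> E2 \<and>
           E1 q \<bullet> E1 q = 1 \<and> E2 q \<bullet> E2 q = 1 \<and> E1 q \<bullet> E2 q = 0
           \<longrightarrow> ind_sec u E1 E2 q = snm_sec E1 E2 q"
proof (intro ballI allI impI)
  note c0 = assms(1) and op = assms(3) and good = assms(5) and ud = assms(6)
  have c1: "2*c - 1 \<noteq> 0" using assms(2) by auto
  fix q0 E1 E2 assume q0: "q0 \<in> \<Omega>" and H: "smooth_field_on \<Omega> E1 \<and> smooth_field_on \<Omega> E2 \<and>
           tangent_field_on u \<Omega> E1 \<and> tangent_field_on u \<Omega> E2 \<and>
           E1 q0 \<bullet> E1 q0 = 1 \<and> E2 q0 \<bullet> E2 q0 = 1 \<and> E1 q0 \<bullet> E2 q0 = 0"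
  then have S1: "smooth_field_on \<Omega> E1" and S2: "smooth_field_on \<Omega> E2"
    and T1: "tangent_field_on u \<Omega> E1" and T2: "tangent_field_on u \<Omega> E2"
    and o11: "E1 q0 \<bullet> E1 q0 = 1" and o22: "E2 q0 \<bullet> E2 q0 = 1" and o12: "E1 q0 \<bullet> E2 q0 = 0" by auto
  define n where "n = unit_normal u q0"
  define e1 where "e1 = E1 q0"
  define e2 where "e2 = E2 q0"
  define G1 where "G1 = gx c q0"
  define G2 where "G2 = gy c q0"
  define f where "f = 1 / sqrt (1 + G1^2 + G2^2)"
  define A where "A = c / (cos (c*q0$1))^2"
  define B where "B = (c/(2*c-1)) / (cos (c * q0$2 / (2*c - 1)))^2"
  have cq: "cos (c*q0$1) > 0" "cos (c * q0$2 / (2*c - 1)) > 0" using good q0 by auto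
  obtain DN where ND: "(unit_normal u has_derivative DN) (at q0)" and
    DNe: "\<And>v e. e \<bullet> vector [-G1, -G2, 1] = 0 \<Longrightarrow> DN v \<bullet> e = - f * (A * v$1 * e$1 + B * v$2 * e$2)"
    using N_props[OF c0 c1 op q0 good ud] unfolding f_def A_def B_def G1_def G2_def by blast
  have fp: "f > 0" unfolding f_def by (simp add: add_pos_nonneg)
  have neq: "n = f *\<^sub>R vector [-G1, -G2, 1]"
    using un_eq[OF u_deriv[OF c0 c1 cq ud]] unfolding n_def f_def G1_def G2_def .
  have e1n: "e1 \<bullet> n = 0" using T1 q0 unfolding tangent_field_on_def e1_def n_def by blast
  have e2n: "e2 \<bullet> n = 0" using T2 q0 unfolding tangent_field_on_def e2_def n_def by blast
  have e1m: "e1 \<bullet> vector [-G1, -G2, 1] = 0" using e1n fp unfolding neq by simp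
  have e2m: "e2 \<bullet> vector [-G1, -G2, 1] = 0" using e2n fp unfolding neq by simp
  have Cn: "Cz \<bullet> n = f" unfolding neq by (simp add: Cz_def inner_vec_def sum_3 axis_def)
  have W22: "snm_nabla E2 E2 differentiable at q0" by (rule snm_diff[OF S2 S2 op q0])
  have W12: "snm_nabla E1 E2 differentiable at q0" by (rule snm_diff[OF S1 S2 op q0])
  have W11: "snm_nabla E1 E1 differentiable at q0" by (rule snm_diff[OF S1 S1 op q0])
  have W21: "snm_nabla E2 E1 differentiable at q0" by (rule snm_diff[OF S2 S1 op q0])
  have Wn: "snm_nabla Ei Ej q0 \<bullet> n = - (DN (proj12 (Ei q0)) \<bullet> Ej q0)"
    if "Ei \<in> {E1, E2}" "Ej \<in> {E1, E2}" for Ei Ej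
  proof -
    have Sj: "smooth_field_on \<Omega> Ej" and Tj: "tangent_field_on u \<Omega> Ej" and Ti: "Ei q0 \<bullet> n = 0"
      using that S1 S2 T1 T2 e1n e2n unfolding e1_def e2_def by auto
    have "frechet_derivative Ej (at q0) (proj12 (Ei q0)) \<bullet> n + Ej q0 \<bullet> DN (proj12 (Ei q0)) = 0"
      using tang_deriv[OF ND smooth_diff(1)[OF Sj op q0] op q0 Tj] unfolding n_def .
    moreover have "snm_nabla Ei Ej q0 \<bullet> n = frechet_derivative Ej (at q0) (proj12 (Ei q0)) \<bullet> n + (Cz \<bullet> Ej q0) * (Ei q0 \<bullet> n)"
      by (simp add: snm_nabla_def flatD_def inner_add_left)
    ultimately show ?thesis using Ti by (simp add: inner_commute[of "Ej q0"])
  qed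
  define h where "h = (\<lambda>(a::real^3) (b::real^3). f * (A * a$1 * b$1 + B * a$2 * b$2))"
  have pj: "proj12 v $ 1 = v $ 1" "proj12 v $ 2 = v $ 2" for v by (simp_all add: proj12_def)
  have DNh: "DN (proj12 a) \<bullet> b = - h a b" if "b \<bullet> vector [-G1, -G2, 1] = 0" for a b
    using DNe[OF that] by (simp add: h_def pj)
  have d11: "DN (proj12 e1) \<bullet> e1 = - h e1 e1" by (rule DNh[OF e1m])
  have d12: "DN (proj12 e1) \<bullet> e2 = - h e1 e2" by (rule DNh[OF e2m])
  have d21: "DN (proj12 e2) \<bullet> e1 = - h e2 e1" by (rule DNh[OF e1m])
  have d22: "DN (proj12 e2) \<bullet> e2 = - h e2 e2" by (rule DNh[OF e2m])
  have w11: "snm_nabla E1 E1 q0 \<bullet> n = h e1 e1" using Wn[of E1 E1] d11 unfolding e1_def by simp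
  have w12: "snm_nabla E1 E2 q0 \<bullet> n = h e1 e2" using Wn[of E1 E2] d12 unfolding e1_def e2_def by simp
  have w21: "snm_nabla E2 E1 q0 \<bullet> n = h e2 e1" using Wn[of E2 E1] d21 unfolding e1_def e2_def by simp
  have w22: "snm_nabla E2 E2 q0 \<bullet> n = h e2 e2" using Wn[of E2 E2] d22 unfolding e2_def by simp
  have o11e: "e1 \<bullet> e1 = 1" and o22e: "e2 \<bullet> e2 = 1" and o12e: "e1 \<bullet> e2 = 0" and o21e: "e2 \<bullet> e1 = 0"
    using o11 o22 o12 unfolding e1_def e2_def by (auto simp: inner_commute)
  have K1: "ind_curv u E1 E2 E2 q0 \<bullet> e1 = snm_curv E1 E2 E2 q0 \<bullet> e1
     - h e2 e2 * (- h e1 e1 + f) + h e1 e2 * (- h e2 e1)"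
    using curv_diff[OF ND W22 W12, folded n_def e1_def e2_def, OF e1n, unfolded w22 w12 d11 d21 Cn o11e o21e]
    by simp
  have K2: "ind_curv u E2 E1 E1 q0 \<bullet> e2 = snm_curv E2 E1 E1 q0 \<bullet> e2
     - h e1 e1 * (- h e2 e2 + f) + h e2 e1 * (- h e1 e2)"
    using curv_diff[OF ND W11 W21, folded n_def e1_def e2_def, OF e2n, unfolded w11 w21 d22 d12 Cn o22e o12e]
    by simp
  have comp: "x \<bullet> vector [-G1, -G2, 1] = 0 \<Longrightarrow> x$3 = G1 * x$1 + G2 * x$2" for x :: "real^3"
    by (simp add: inner_vec_def sum_3 algebra_simps)
  have sq: "x \<bullet> y = x$1*y$1 + x$2*y$2 + x$3*y$3" for x y :: "real^3"
    by (simp add: inner_vec_def sum_3)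
  have oo: "e1$1^2 + e1$2^2 + (G1*e1$1 + G2*e1$2)^2 = 1" "e2$1^2 + e2$2^2 + (G1*e2$1 + G2*e2$2)^2 = 1"
      "e1$1*e2$1 + e1$2*e2$2 + (G1*e1$1 + G2*e1$2)*(G1*e2$1 + G2*e2$2) = 0"
    using o11 o22 o12 comp[OF e1m] comp[OF e2m] unfolding e1_def[symmetric] e2_def[symmetric] sq
    by (simp_all add: power2_eq_square)
  have tan1: "1 + (tan x)^2 = 1 / (cos x)^2" if "cos x \<noteq> 0" for x :: real
    using that by (simp add: tan_def power_divide field_simps sin_squared_eq)
  have Aeq: "A = c * (1 + G1^2)" unfolding A_def G1_def gx_def using tan1[of "c*q0$1"] cq by simp
  have Beq: "B = (c/(2*c-1)) * (1 + G2^2)" unfolding B_def G2_def gy_def using tan1[of "c * q0$2 / (2*c - 1)"] cq by simp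
  have kk: "(c/(2*c-1)) * (2*c-1) = c" using c1 by simp
  have fin: "2*((A*e1$1*e1$1+B*e1$2*e1$2)*(A*e2$1*e2$1+B*e2$2*e2$2)) - 2*(A*e1$1*e2$1+B*e1$2*e2$2)^2
      = A*(e1$1^2+e2$1^2)+B*(e1$2^2+e2$2^2)"
    by (rule final_alg[OF oo Aeq Beq kk])
  have "(- h e2 e2 * (- h e1 e1 + f) + h e1 e2 * (- h e2 e1)) + (- h e1 e1 * (- h e2 e2 + f) + h e2 e1 * (- h e1 e2))
     = f^2 * ((2*((A*e1$1*e1$1+B*e1$2*e1$2)*(A*e2$1*e2$1+B*e2$2*e2$2)) - 2*(A*e1$1*e2$1+B*e1$2*e2$2)^2)
        - (A*(e1$1^2+e2$1^2)+B*(e1$2^2+e2$2^2)))"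
    unfolding h_def by (simp add: power2_eq_square algebra_simps)
  also have "\<dots> = 0" using fin by simp
  finally have Z: "(- h e2 e2 * (- h e1 e1 + f) + h e1 e2 * (- h e2 e1)) + (- h e1 e1 * (- h e2 e2 + f) + h e2 e1 * (- h e1 e2)) = 0" .
  show "ind_sec u E1 E2 q0 = snm_sec E1 E2 q0"
    unfolding ind_sec_def snm_sec_def e1_def[symmetric] e2_def[symmetric] K1 K2 using Z by simp
qed
end
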